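(* Convolution $(\sigma,\tau)\mapsto\sigma*\tau$ is a Baire class 1 map from $\mathcal T\times\mathcal T$ to $\mathcal T$.
   Context: Standing setting: $(X,\|\cdot\|)$ is a separable infinite-dimensional Banach space and $d$ is a translation-invariant stable pseudometric on $X$ such that $\mathrm{Id}\colon(X,\|\cdot\|)\to(X,d)$ is a coarse equivalence. $\Delta$ is a countable $\|\cdot\|$-dense $\mathbb Q$-linear subspace of $X$; for $x\in\Delta$, $\bar x(\lambda,y)=d(\lambda x,y)$. $\mathcal T$ is the closure of $\{\bar x:x\in\Delta\}$ in $\mathbb R^{\mathbb Q\times\Delta}$ (pointwise topology, metrizable). For $\sigma,\tau\in\mathcal T$ with defining sequences $(x_n),(y_m)$ (i.e. $\bar x_n\to\sigma$, $\bar y_m\to\tau$), $\sigma*\tau=\lim_n\lim_m\overline{x_n+y_m}$. A map is Baire class 1 if preimages of open sets are $F_\sigma$. *)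

theory Defs
  imports "HOL-Analysis.Analysis"
begin

definition separable_space :: "'a::real_normed_vector itself \<Rightarrow> bool" where
  "separable_space _ \<longleftrightarrow> (\<exists>D::'a set. countable D \<and> closure D = UNIV)"

definition infinite_dimensional :: "'a::real_normed_vector itself \<Rightarrow> bool" where
  "infinite_dimensional _ \<longleftrightarrow> (\<forall>S::'a set. finite S \<longrightarrow> span S \<noteq> UNIV)"

definition pseudometric :: "('a \<Rightarrow> 'a \<Rightarrow> real) \<Rightarrow> bool" where
  "pseudometric d \<longleftrightarrow> (\<forall>x. d x x = 0) \<and> (\<forall>x y. d x y \<ge> 0) \<and> (\<forall>x y. d x y = d y x)
     \<and> (\<forall>x y z. d x z \<le> d x y + d y z)"

definition translation_invariant :: "('a::ab_group_add \<Rightarrow> 'a \<Rightarrow> real) \<Rightarrow> bool" where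
  "translation_invariant d \<longleftrightarrow> (\<forall>x y z. d (x + z) (y + z) = d x y)"

definition stable_pm :: "('a::zero \<Rightarrow> 'a \<Rightarrow> real) \<Rightarrow> bool" where
  "stable_pm d \<longleftrightarrow> (\<forall>(x::nat \<Rightarrow> 'a) (y::nat \<Rightarrow> 'a) (f::nat \<Rightarrow> real) (g::nat \<Rightarrow> real) a b.
      (\<exists>M. \<forall>n. d (x n) 0 \<le> M \<and> d (y n) 0 \<le> M) \<and>
      (\<forall>n. (\<lambda>m. d (x n) (y m)) \<longlonglongrightarrow> f n) \<and> f \<longlonglongrightarrow> a \<and>
      (\<forall>m. (\<lambda>n. d (x n) (y m)) \<longlonglongrightarrow> g m) \<and> g \<longlonglongrightarrow> b
      \<longrightarrow> a = b)"

text \<open>The identity (X,norm) \<rightarrow> (X,d) is a coarse equivalence (it is a bijection, so this means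
  it is bornologous and expanding / coarse embedding).\<close>
definition id_coarse_equiv :: "('a::real_normed_vector \<Rightarrow> 'a \<Rightarrow> real) \<Rightarrow> bool" where
  "id_coarse_equiv d \<longleftrightarrow>
     (\<forall>R. \<exists>S. \<forall>x y. norm (x - y) \<le> R \<longrightarrow> d x y \<le> S) \<and>
     (\<forall>S. \<exists>R. \<forall>x y. d x y \<le> S \<longrightarrow> norm (x - y) \<le> R)"

definition rat_linear_subspace :: "'a::real_vector set \<Rightarrow> bool" where
  "rat_linear_subspace D \<longleftrightarrow> 0 \<in> D \<and> (\<forall>x\<in>D. \<forall>y\<in>D. x + y \<in> D)
     \<and> (\<forall>q::rat. \<forall>x\<in>D. real_of_rat q *\<^sub>R x \<in> D)"

text \<open>The ambient space R^(Q x Delta) with the product (pointwise) topology; its points are the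
  extensional functions on Q x Delta.\<close>
definition ambient :: "'a set \<Rightarrow> (rat \<times> 'a \<Rightarrow> real) topology" where
  "ambient D = product_topology (\<lambda>_. euclideanreal) (UNIV \<times> D)"

definition bar :: "('a::real_vector \<Rightarrow> 'a \<Rightarrow> real) \<Rightarrow> 'a set \<Rightarrow> 'a \<Rightarrow> (rat \<times> 'a \<Rightarrow> real)" where
  "bar d D x = restrict (\<lambda>(q, y). d (real_of_rat q *\<^sub>R x) y) (UNIV \<times> D)"

definition Tsp :: "('a::real_vector \<Rightarrow> 'a \<Rightarrow> real) \<Rightarrow> 'a set \<Rightarrow> (rat \<times> 'a \<Rightarrow> real) set" where
  "Tsp d D = (ambient D) closure_of (bar d D ` D)"

definition defining_seq :: "('a::real_vector \<Rightarrow> 'a \<Rightarrow> real) \<Rightarrow> 'a set \<Rightarrow> (nat \<Rightarrow> 'a) \<Rightarrow> (rat \<times> 'a \<Rightarrow> real) \<Rightarrow> bool" where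
  "defining_seq d D x \<sigma> \<longleftrightarrow> (\<forall>n. x n \<in> D) \<and> limitin (ambient D) (\<lambda>n. bar d D (x n)) \<sigma> sequentially"

definition conv :: "('a::real_vector \<Rightarrow> 'a \<Rightarrow> real) \<Rightarrow> 'a set \<Rightarrow> (rat \<times> 'a \<Rightarrow> real) \<Rightarrow> (rat \<times> 'a \<Rightarrow> real) \<Rightarrow> (rat \<times> 'a \<Rightarrow> real)" where
  "conv d D \<sigma> \<tau> = (THE \<rho>. \<forall>x y. defining_seq d D x \<sigma> \<and> defining_seq d D y \<tau> \<longrightarrow>
      (\<exists>g. (\<forall>n. limitin (ambient D) (\<lambda>m. bar d D (x n + y m)) (g n) sequentially)
           \<and> limitin (ambient D) g \<rho> sequentially))"

definition baire1_map :: "'a topology \<Rightarrow> 'b topology \<Rightarrow> ('a \<Rightarrow> 'b) \<Rightarrow> bool" where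
  "baire1_map X Y f \<longleftrightarrow> f \<in> topspace X \<rightarrow> topspace Y \<and>
     (\<forall>U. openin Y U \<longrightarrow> fsigma_in X {x \<in> topspace X. f x \<in> U})"

end

theory Submission
  imports Defs
begin



lemma all_subseq_lim:
  fixes f :: "nat \<Rightarrow> real"
  assumes B: "Bseq f" and H: "\<And>r \<alpha>. strict_mono r \<Longrightarrow> (f \<circ> r) \<longlonglongrightarrow> \<alpha> \<Longrightarrow> \<alpha> = \<beta>"
  shows "f \<longlonglongrightarrow> \<beta>"
proof (rule ccontr)
  assume "\<not> f \<longlonglongrightarrow> \<beta>"
  then obtain \<epsilon> where e: "\<epsilon> > 0" and fr: "\<forall>N. \<exists>n\<ge>N. dist (f n) \<beta> \<ge> \<epsilon>"
    unfolding LIMSEQ_def by (auto simp: not_less)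
  have "infinite {n. dist (f n) \<beta> \<ge> \<epsilon>}"
    using fr by (simp add: infinite_nat_iff_unbounded_le)
  from infinite_enumerate[OF this] obtain r :: "nat \<Rightarrow> nat" where r0: "strict_mono r \<and> (\<forall>n. r n \<in> {n. dist (f n) \<beta> \<ge> \<epsilon>})"
    by (elim exE)
  then have r: "strict_mono r" "\<And>n. r n \<in> {n. dist (f n) \<beta> \<ge> \<epsilon>}" by auto
  obtain s where s: "strict_mono s" "monoseq (\<lambda>n. (f \<circ> r) (s n))"
    using seq_monosub by blast
  have "Bseq (\<lambda>n. (f \<circ> r) (s n))"
    using Bseq_subseq[OF Bseq_subseq[OF B, of r], of s] by (simp add: o_def)
  then have "convergent (\<lambda>n. (f \<circ> r) (s n))"
    using s(2) Bseq_monoseq_convergent by blast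
  then obtain \<alpha> where a: "(\<lambda>n. (f \<circ> r) (s n)) \<longlonglongrightarrow> \<alpha>" by (auto simp: convergent_def)
  have "strict_mono (r \<circ> s)" using r(1) s(1) by (simp add: strict_mono_o)
  moreover have "(f \<circ> (r \<circ> s)) \<longlonglongrightarrow> \<alpha>" using a by (simp add: o_def)
  ultimately have "\<alpha> = \<beta>" by (rule H)
  moreover have "dist \<alpha> \<beta> \<ge> \<epsilon>"
  proof (rule tendsto_lowerbound)
    show "((\<lambda>n. dist ((f \<circ> r) (s n)) \<beta>)) \<longlonglongrightarrow> dist \<alpha> \<beta>"
      by (intro tendsto_intros a)
    show "\<forall>\<^sub>F n in sequentially. \<epsilon> \<le> dist ((f \<circ> r) (s n)) \<beta>" using r(2) by simp
  qed simp
  ultimately show False using e by simp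
qed

lemma double_lim:
  fixes a :: "nat \<Rightarrow> nat \<Rightarrow> real"
  assumes M: "\<And>n m. \<bar>a n m\<bar> \<le> M"
    and f: "\<And>n. (\<lambda>m. a n m) \<longlonglongrightarrow> f n" and g: "\<And>m. (\<lambda>n. a n m) \<longlonglongrightarrow> g m"
    and stab: "\<And>r s \<alpha> \<beta>. strict_mono r \<Longrightarrow> strict_mono s \<Longrightarrow> (f \<circ> r) \<longlonglongrightarrow> \<alpha> \<Longrightarrow> (g \<circ> s) \<longlonglongrightarrow> \<beta> \<Longrightarrow> \<alpha> = \<beta>"
  shows "\<exists>L. f \<longlonglongrightarrow> L \<and> g \<longlonglongrightarrow> L"
proof -
  have fb: "\<bar>f n\<bar> \<le> M" for n
  proof -
    have "\<forall>\<^sub>F m in sequentially. \<bar>a n m\<bar> \<le> M" using M by simp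
    then show ?thesis using tendsto_upperbound[OF tendsto_rabs[OF f]] by simp
  qed
  have gb: "\<bar>g n\<bar> \<le> M" for n
  proof -
    have "\<forall>\<^sub>F m in sequentially. \<bar>a m n\<bar> \<le> M" using M by simp
    then show ?thesis using tendsto_upperbound[OF tendsto_rabs[OF g]] by simp
  qed
  have Bf: "Bseq f" using fb by (intro BseqI'[of _ M]) auto
  have Bg: "Bseq g" using gb by (intro BseqI'[of _ M]) auto
  obtain s where s: "strict_mono s" "monoseq (\<lambda>n. g (s n))"
    using seq_monosub by blast
  have "Bseq (\<lambda>n. g (s n))" by (rule Bseq_subseq[OF Bg])
  then have "convergent (\<lambda>n. g (s n))" by (rule Bseq_monoseq_convergent[OF _ s(2)])
  then obtain \<beta> where "(\<lambda>n. g (s n)) \<longlonglongrightarrow> \<beta>" by (auto simp: convergent_def)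
  then have b: "(g \<circ> s) \<longlonglongrightarrow> \<beta>" by (simp add: o_def)
  have F: "f \<longlonglongrightarrow> \<beta>"
  proof (rule all_subseq_lim[OF Bf])
    fix r \<alpha> assume "strict_mono r" "(f \<circ> r) \<longlonglongrightarrow> \<alpha>"
    then show "\<alpha> = \<beta>" using stab[OF _ s(1) _ b] by auto
  qed
  have "g \<longlonglongrightarrow> \<beta>"
  proof (rule all_subseq_lim[OF Bg])
    fix r \<alpha> assume "strict_mono r" "(g \<circ> r) \<longlonglongrightarrow> \<alpha>"
    moreover have "strict_mono (id::nat\<Rightarrow>nat)" by (simp add: strict_mono_def)
    moreover have "(f \<circ> id) \<longlonglongrightarrow> \<beta>" using F by simp
    ultimately show "\<alpha> = \<beta>" using stab[of id r \<beta> \<alpha>] by auto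
  qed
  then show ?thesis using F by blast
qed




definition basic :: "'a set \<Rightarrow> ((rat \<times> 'a) \<times> rat \<times> rat) list \<Rightarrow> (rat \<times> 'a \<Rightarrow> real) set" where
  "basic D L = {f \<in> topspace (ambient D). \<forall>(k,a,b) \<in> set L. real_of_rat a < f k \<and> f k < real_of_rat b}"

definition Lset :: "'a set \<Rightarrow> ((rat \<times> 'a) \<times> rat \<times> rat) list set" where
  "Lset D = lists ((UNIV \<times> D) \<times> UNIV \<times> UNIV)"

lemma topspace_ambient: "topspace (ambient D) = (\<Pi>\<^sub>E k\<in>UNIV \<times> D. UNIV)"
  by (simp add: ambient_def)

lemma Lset_countable: "countable D \<Longrightarrow> countable (Lset D)"
  unfolding Lset_def by (intro countable_lists countable_SIGMA) auto

lemma basic_Nil: "basic D [] = topspace (ambient D)"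
  by (simp add: basic_def)

lemma basic_concat: "basic D (concat Ls) = topspace (ambient D) \<inter> (\<Inter>L\<in>set Ls. basic D L)"
  by (auto simp: basic_def)

lemma proj_cont: "k \<in> UNIV \<times> D \<Longrightarrow> continuous_map (ambient D) euclideanreal (\<lambda>f. f k)"
  unfolding ambient_def by (rule continuous_map_product_projection)

lemma closedin_box:
  assumes "\<And>j. j \<in> J \<Longrightarrow> kk j \<in> UNIV \<times> D"
  shows "closedin (ambient D) {f \<in> topspace (ambient D). \<forall>j\<in>J. c1 j \<le> f (kk j) \<and> f (kk j) \<le> c2 j}"
proof (cases "J = {}")
  case True then show ?thesis by simp
next
  case False
  have eq: "{f \<in> topspace (ambient D). \<forall>j\<in>J. c1 j \<le> f (kk j) \<and> f (kk j) \<le> c2 j}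
     = (\<Inter>j\<in>J. {f \<in> topspace (ambient D). f (kk j) \<in> {c1 j..c2 j}})"
    using False by auto
  show ?thesis unfolding eq
  proof (rule closedin_Inter)
    show "(\<lambda>j. {f \<in> topspace (ambient D). f (kk j) \<in> {c1 j..c2 j}}) ` J \<noteq> {}" using False by simp
    fix S assume "S \<in> (\<lambda>j. {f \<in> topspace (ambient D). f (kk j) \<in> {c1 j..c2 j}}) ` J"
    then obtain j where j: "j \<in> J" and S: "S = {f \<in> topspace (ambient D). f (kk j) \<in> {c1 j..c2 j}}" by blast
    show "closedin (ambient D) S" unfolding S
      by (rule closedin_continuous_map_preimage[OF proj_cont[OF assms[OF j]]])
         (simp add: closed_closedin[symmetric])
  qed
qed

lemma openin_basic:
  assumes "L \<in> Lset D" shows "openin (ambient D) (basic D L)"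
  using assms
proof (induction L)
  case Nil then show ?case by (simp add: basic_Nil)
next
  case (Cons t L)
  obtain k a b where t: "t = (k,a,b)" by (cases t) auto
  have "t # L \<in> lists ((UNIV \<times> D) \<times> UNIV \<times> UNIV)" using Cons.prems by (simp add: Lset_def)
  then have k: "k \<in> UNIV \<times> D" and L: "L \<in> Lset D" unfolding Lset_def t by auto
  have eq: "basic D (t # L) = {f \<in> topspace (ambient D). f k \<in> {real_of_rat a<..<real_of_rat b}} \<inter> basic D L"
    by (auto simp: basic_def t)
  have oi: "openin euclideanreal {real_of_rat a<..<real_of_rat b}"
    by (metis open_greaterThanLessThan open_openin)
  have o1: "openin (ambient D) {f \<in> topspace (ambient D). f k \<in> {real_of_rat a<..<real_of_rat b}}"
    by (rule openin_continuous_map_preimage[OF proj_cont[OF k] oi])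
  show ?case unfolding eq
    by (rule openin_Int[OF o1 Cons.IH[OF L]])
qed

lemma basic_nbhd:
  assumes W: "openin (ambient D) W" and f: "f \<in> W"
  shows "\<exists>L\<in>Lset D. f \<in> basic D L \<and> basic D L \<subseteq> W"
proof -
  have "\<forall>x\<in>W. \<exists>U. finite {i \<in> UNIV \<times> D. U i \<noteq> topspace euclideanreal} \<and>
                 (\<forall>i \<in> UNIV \<times> D. openin euclideanreal (U i)) \<and> x \<in> (\<Pi>\<^sub>E i\<in>UNIV \<times> D. U i) \<and> (\<Pi>\<^sub>E i\<in>UNIV \<times> D. U i) \<subseteq> W"
    using W unfolding ambient_def openin_product_topology_alt .
  from bspec[OF this f] obtain U where U4: "finite {i \<in> UNIV \<times> D. U i \<noteq> topspace euclideanreal} \<and>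
                 (\<forall>i \<in> UNIV \<times> D. openin euclideanreal (U i)) \<and> f \<in> (\<Pi>\<^sub>E i\<in>UNIV \<times> D. U i) \<and> (\<Pi>\<^sub>E i\<in>UNIV \<times> D. U i) \<subseteq> W"
    by (elim exE)
  then have fin: "finite {i \<in> UNIV \<times> D. U i \<noteq> topspace euclideanreal}"
    and op: "\<forall>i \<in> UNIV \<times> D. openin euclideanreal (U i)"
    and fU: "f \<in> (\<Pi>\<^sub>E i\<in>UNIV \<times> D. U i)" and sub: "(\<Pi>\<^sub>E i\<in>UNIV \<times> D. U i) \<subseteq> W"
    by blast+
  define K where "K = {i \<in> UNIV \<times> D. U i \<noteq> UNIV}"
  have finK: "finite K" using fin by (simp add: K_def)
  have "\<forall>i\<in>K. \<exists>ab. real_of_rat (fst ab) < f i \<and> f i < real_of_rat (snd ab) \<and>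
        {real_of_rat (fst ab)<..<real_of_rat (snd ab)} \<subseteq> U i"
  proof
    fix i assume i: "i \<in> K"
    then have iI: "i \<in> UNIV \<times> D" by (simp add: K_def)
    then have "openin euclideanreal (U i)" using op by blast
    then have "open (U i)" by (simp only: open_openin)
    have "f i \<in> U i" using fU iI by (auto simp: PiE_iff)
    then obtain e where e: "e > 0" "ball (f i) e \<subseteq> U i" using \<open>open (U i)\<close> by (meson open_contains_ball)
    obtain a where a: "f i - e < real_of_rat a" "real_of_rat a < f i" using of_rat_dense[of "f i - e" "f i"] e by auto
    obtain b where b: "f i < real_of_rat b" "real_of_rat b < f i + e" using of_rat_dense[of "f i" "f i + e"] e by auto
    have "{real_of_rat a<..<real_of_rat b} \<subseteq> ball (f i) e"
      using a b by (auto simp: ball_def dist_real_def)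
    then show "\<exists>ab. real_of_rat (fst ab) < f i \<and> f i < real_of_rat (snd ab) \<and>
        {real_of_rat (fst ab)<..<real_of_rat (snd ab)} \<subseteq> U i"
      using a b e by (intro exI[of _ "(a,b)"]) auto
  qed
  then obtain ab where ab: "\<And>i. i\<in>K \<Longrightarrow> real_of_rat (fst (ab i)) < f i \<and> f i < real_of_rat (snd (ab i)) \<and>
        {real_of_rat (fst (ab i))<..<real_of_rat (snd (ab i))} \<subseteq> U i"
    by metis
  obtain ks where ks: "set ks = K" using finite_list[OF finK] by blast
  define L where "L = map (\<lambda>i. (i, fst (ab i), snd (ab i))) ks"
  have setL: "set L = (\<lambda>i. (i, fst (ab i), snd (ab i))) ` K" by (simp add: L_def ks)
  have "set L \<subseteq> (UNIV \<times> D) \<times> UNIV \<times> UNIV" unfolding setL K_def by blast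
  then have "L \<in> Lset D" unfolding Lset_def by (simp add: lists_eq_set)
  moreover have "f \<in> basic D L"
  proof -
    have ftop: "f \<in> topspace (ambient D)" using fU unfolding topspace_ambient by (auto simp: PiE_iff)
    have tL: "\<forall>t \<in> set L. real_of_rat (fst (snd t)) < f (fst t) \<and> f (fst t) < real_of_rat (snd (snd t))"
      unfolding setL using ab by auto
    moreover have "\<forall>(k,a,b) \<in> set L. real_of_rat a < f k \<and> f k < real_of_rat b"
      using tL by (simp add: case_prod_beta)
    ultimately show ?thesis using ftop by (simp add: basic_def)
  qed
  moreover have "basic D L \<subseteq> W"
  proof
    fix g assume g: "g \<in> basic D L"
    have "g \<in> (\<Pi>\<^sub>E i\<in>UNIV \<times> D. U i)"
    proof (rule PiE_I)
      fix i :: "rat \<times> 'a" assume i: "i \<in> UNIV \<times> D"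
      show "g i \<in> U i"
      proof (cases "i \<in> K")
        case True
        then have "(i, fst (ab i), snd (ab i)) \<in> set L" using ks by (auto simp: L_def)
        then have "g i \<in> {real_of_rat (fst (ab i))<..<real_of_rat (snd (ab i))}"
          using g by (auto simp: basic_def)
        then show ?thesis using ab[OF True] by blast
      next
        case False then show ?thesis using i by (auto simp: K_def)
      qed
    next
      fix i :: "rat \<times> 'a" assume "i \<notin> UNIV \<times> D"
      moreover have "g \<in> extensional (UNIV \<times> D)" using g by (simp add: basic_def topspace_ambient PiE_iff)
      ultimately show "g i = undefined" by (cases i) (simp add: extensional_def)
    qed
    then show "g \<in> W" using sub by blast
  qed
  ultimately show ?thesis by blast
qed

lemma nbhd_seq:
  assumes cD: "countable D" and s: "\<sigma> \<in> topspace (ambient D)"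
    and H: "\<And>L. L \<in> Lset D \<Longrightarrow> \<sigma> \<in> basic D L \<Longrightarrow> \<exists>w\<in>D. h w \<in> basic D L \<and> P w"
  shows "\<exists>x. (\<forall>n. x n \<in> D \<and> P (x n)) \<and> limitin (ambient D) (\<lambda>n. h (x n)) \<sigma> sequentially"
proof -
  define A where "A = {L \<in> Lset D. \<sigma> \<in> basic D L}"
  have "[] \<in> A" using s by (simp add: A_def basic_Nil Lset_def)
  then have A1: "A \<noteq> {}" by blast
  have A2: "countable A"
    by (rule countable_subset[OF _ Lset_countable[OF cD]]) (auto simp: A_def)
  note A = A1 A2
  define e where "e = from_nat_into A"
  have eA: "e i \<in> A" for i using from_nat_into[OF A(1)] by (simp add: e_def)
  define N where "N n = concat (map e [0..<Suc n])" for n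
  have NL: "N n \<in> Lset D" for n
  proof -
    have "\<And>i. set (e i) \<subseteq> (UNIV \<times> D) \<times> UNIV"
    proof -
      fix i have "e i \<in> lists ((UNIV \<times> D) \<times> UNIV)" using eA[of i] by (simp add: A_def Lset_def)
      then show "set (e i) \<subseteq> (UNIV \<times> D) \<times> UNIV" by (simp add: in_lists_conv_set subset_iff)
    qed
    then have "set (N n) \<subseteq> (UNIV \<times> D) \<times> UNIV" unfolding N_def set_concat set_map by blast
    then show ?thesis by (simp add: Lset_def lists_eq_set)
  qed
  have Ns: "\<sigma> \<in> basic D (N n)" for n unfolding N_def basic_concat using eA s by (auto simp: A_def simp del: upt_Suc)
  have Nsub: "basic D (N n) \<subseteq> basic D (e j)" if "j \<le> n" for j n
  proof -
    have "j \<in> set [0..<Suc n]" unfolding set_upt using that by simp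
    then have "e j \<in> set (map e [0..<Suc n])" unfolding set_map by (rule imageI)
    then show ?thesis unfolding N_def basic_concat by blast
  qed
  have "\<forall>n. \<exists>w. w \<in> D \<and> h w \<in> basic D (N n) \<and> P w" using H[OF NL Ns] by blast
  from choice[OF this] obtain x where x0: "\<forall>n. x n \<in> D \<and> h (x n) \<in> basic D (N n) \<and> P (x n)" by blast
  then have x: "\<And>n. x n \<in> D \<and> h (x n) \<in> basic D (N n) \<and> P (x n)" by blast
  have "limitin (ambient D) (\<lambda>n. h (x n)) \<sigma> sequentially"
    unfolding limitin_sequentially
  proof (intro conjI allI impI)
    show "\<sigma> \<in> topspace (ambient D)" by (rule s)
    fix U assume U: "openin (ambient D) U \<and> \<sigma> \<in> U"
    then obtain L where L: "L \<in> Lset D" "\<sigma> \<in> basic D L" "basic D L \<subseteq> U" using basic_nbhd by meson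
    then have "L \<in> A" by (simp add: A_def)
    then obtain j where j: "e j = L" using from_nat_into_surj[OF A(2)] by (auto simp: e_def)
    have "h (x n) \<in> U" if "j \<le> n" for n
    proof -
      have "h (x n) \<in> basic D (N n)" using x by blast
      also have "\<dots> \<subseteq> basic D (e j)" by (rule Nsub[OF that])
      finally show ?thesis using L(3) j by blast
    qed
    then show "\<exists>N. \<forall>n\<ge>N. h (x n) \<in> U" by blast
  qed
  then show ?thesis using x by blast
qed




context
  fixes d :: "'a::real_normed_vector \<Rightarrow> 'a \<Rightarrow> real" and D :: "'a set"
  assumes pm: "pseudometric d" and ti: "translation_invariant d" and st: "stable_pm d"
    and rl: "rat_linear_subspace D"
begin

lemma D0: "0 \<in> D" using rl by (simp add: rat_linear_subspace_def)
lemma Dadd: "x \<in> D \<Longrightarrow> y \<in> D \<Longrightarrow> x + y \<in> D" using rl by (simp add: rat_linear_subspace_def)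
lemma Dscale: "x \<in> D \<Longrightarrow> real_of_rat q *\<^sub>R x \<in> D" using rl by (simp add: rat_linear_subspace_def)
lemma Ddiff: "x \<in> D \<Longrightarrow> y \<in> D \<Longrightarrow> x - y \<in> D"
proof -
  assume "x \<in> D" "y \<in> D"
  have "real_of_rat (-1) *\<^sub>R y \<in> D" by (rule Dscale[OF \<open>y \<in> D\<close>])
  then have "- y \<in> D" by simp
  from Dadd[OF \<open>x \<in> D\<close> this] show ?thesis by simp
qed

lemma tinv: "d (x + z) (y + z) = d x y" using ti by (simp add: translation_invariant_def)
lemma dsym: "d x y = d y x" using pm by (simp add: pseudometric_def)
lemma dtri: "d x z \<le> d x y + d y z" using pm by (simp add: pseudometric_def)
lemma dnn: "d x y \<ge> 0" using pm by (simp add: pseudometric_def)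

lemma tr1: "d (a + b) z = d b (z - a)"
  using tinv[of b a "z - a"] by (simp add: add.commute)
lemma tr2: "d (a + b) z = d a (z - b)"
  using tinv[of a b "z - b"] by simp
lemma tr3: "d (z - c) 0 = d z c"
  using tinv[of "z - c" c 0] by simp

lemma bar_app: "w \<in> D \<Longrightarrow> bar d D x (q, w) = d (real_of_rat q *\<^sub>R x) w"
  by (simp add: bar_def)

lemma DL:
  assumes "defining_seq d D x \<sigma>" "w \<in> D"
  shows "(\<lambda>n. d (real_of_rat q *\<^sub>R x n) w) \<longlonglongrightarrow> \<sigma> (q, w)"
proof -
  have "limitin (product_topology (\<lambda>_. euclideanreal) (UNIV \<times> D)) (\<lambda>n. bar d D (x n)) \<sigma> sequentially"
    using assms(1) by (simp add: defining_seq_def ambient_def)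
  then have "limitin euclideanreal (\<lambda>n. bar d D (x n) (q, w)) (\<sigma> (q, w)) sequentially"
    using assms(2) unfolding limitin_componentwise by blast
  then show ?thesis using assms(2) by (simp add: bar_app)
qed

lemma Bseq_conv: "f \<longlonglongrightarrow> l \<Longrightarrow> \<exists>K. \<forall>n. \<bar>f n\<bar> \<le> (K::real)"
proof -
  assume "f \<longlonglongrightarrow> l"
  then have "Bseq f" using convergent_imp_Bseq convergentI by blast
  then obtain K where "\<forall>n. norm (f n) \<le> K" by (auto elim: BseqE)
  then show ?thesis by auto
qed

lemma MLim:
  assumes x: "defining_seq d D x \<sigma>" and y: "defining_seq d D y \<tau>" and z: "z \<in> D"
  shows "\<exists>L. (\<lambda>n. \<tau> (q, z - real_of_rat q *\<^sub>R x n)) \<longlonglongrightarrow> L \<and> (\<lambda>m. \<sigma> (q, z - real_of_rat q *\<^sub>R y m)) \<longlonglongrightarrow> L"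
proof -
  define X where "X n = real_of_rat q *\<^sub>R x n" for n
  define Y where "Y m = z - real_of_rat q *\<^sub>R y m" for m
  define a where "a n m = d (X n) (Y m)" for n m
  define f where "f n = \<tau> (q, z - real_of_rat q *\<^sub>R x n)" for n
  define g where "g m = \<sigma> (q, z - real_of_rat q *\<^sub>R y m)" for m
  have xD: "x n \<in> D" for n using x by (simp add: defining_seq_def)
  have yD: "y n \<in> D" for n using y by (simp add: defining_seq_def)
  have fl: "(\<lambda>m. a n m) \<longlonglongrightarrow> f n" for n
  proof -
    have "z - real_of_rat q *\<^sub>R x n \<in> D" using Ddiff[OF z Dscale[OF xD]] .
    from DL[OF y this, of q]
    have "(\<lambda>m. d (real_of_rat q *\<^sub>R y m) (z - real_of_rat q *\<^sub>R x n)) \<longlonglongrightarrow> f n" by (simp add: f_def)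
    moreover have "d (real_of_rat q *\<^sub>R y m) (z - real_of_rat q *\<^sub>R x n) = a n m" for m
      using tr1[of "real_of_rat q *\<^sub>R x n" "real_of_rat q *\<^sub>R y m" z] tr2[of "real_of_rat q *\<^sub>R x n" "real_of_rat q *\<^sub>R y m" z]
      by (simp add: a_def X_def Y_def)
    ultimately show ?thesis by simp
  qed
  have gl: "(\<lambda>n. a n m) \<longlonglongrightarrow> g m" for m
  proof -
    have "z - real_of_rat q *\<^sub>R y m \<in> D" using Ddiff[OF z Dscale[OF yD]] .
    from DL[OF x this, of q] show ?thesis by (simp add: g_def a_def X_def Y_def)
  qed
  obtain K1 where K1: "\<And>n. \<bar>d (X n) 0\<bar> \<le> K1"
    using Bseq_conv[OF DL[OF x D0, of q]] unfolding X_def by blast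
  obtain K2 where K2: "\<And>n. \<bar>d (real_of_rat q *\<^sub>R y n) 0\<bar> \<le> K2"
    using Bseq_conv[OF DL[OF y D0, of q]] by blast
  have Yb: "d (Y m) 0 \<le> d z 0 + K2" for m
  proof -
    have "d (Y m) 0 = d z (real_of_rat q *\<^sub>R y m)" unfolding Y_def by (rule tr3)
    also have "\<dots> \<le> d z 0 + d 0 (real_of_rat q *\<^sub>R y m)" by (rule dtri)
    also have "\<dots> \<le> d z 0 + K2" using K2[of m] dsym[of 0 "real_of_rat q *\<^sub>R y m"] by simp
    finally show ?thesis .
  qed
  have Xb: "d (X n) 0 \<le> K1" for n using K1[of n] by simp
  have ab: "\<bar>a n m\<bar> \<le> K1 + (d z 0 + K2)" for n m
  proof -
    have "a n m \<le> d (X n) 0 + d 0 (Y m)" unfolding a_def by (rule dtri)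
    also have "\<dots> = d (X n) 0 + d (Y m) 0" using dsym[of 0 "Y m"] by simp
    also have "\<dots> \<le> K1 + (d z 0 + K2)" using Xb[of n] Yb[of m] by simp
    finally show ?thesis using dnn[of "X n" "Y m"] by (simp add: a_def)
  qed
  have stab: "\<alpha> = \<beta>" if r: "strict_mono r" and s: "strict_mono s"
    and fa: "(f \<circ> r) \<longlonglongrightarrow> \<alpha>" and gb: "(g \<circ> s) \<longlonglongrightarrow> \<beta>" for r s \<alpha> \<beta>
  proof -
    have H: "(\<exists>M. \<forall>n. d ((X \<circ> r) n) 0 \<le> M \<and> d ((Y \<circ> s) n) 0 \<le> M) \<and>
      (\<forall>n. (\<lambda>m. d ((X \<circ> r) n) ((Y \<circ> s) m)) \<longlonglongrightarrow> (f \<circ> r) n) \<and> (f \<circ> r) \<longlonglongrightarrow> \<alpha> \<and>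
      (\<forall>m. (\<lambda>n. d ((X \<circ> r) n) ((Y \<circ> s) m)) \<longlonglongrightarrow> (g \<circ> s) m) \<and> (g \<circ> s) \<longlonglongrightarrow> \<beta>"
    proof (intro conjI allI)
      show "\<exists>M. \<forall>n. d ((X \<circ> r) n) 0 \<le> M \<and> d ((Y \<circ> s) n) 0 \<le> M"
        using Xb Yb by (intro exI[of _ "max K1 (d z 0 + K2)"]) (auto simp: le_max_iff_disj)
      fix n
      have "(\<lambda>m. a (r n) m) \<longlonglongrightarrow> f (r n)" by (rule fl)
      from LIMSEQ_subseq_LIMSEQ[OF this s]
      show "(\<lambda>m. d ((X \<circ> r) n) ((Y \<circ> s) m)) \<longlonglongrightarrow> (f \<circ> r) n" by (simp add: a_def o_def)
    next
      fix m
      have "(\<lambda>n. a n (s m)) \<longlonglongrightarrow> g (s m)" by (rule gl)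
      from LIMSEQ_subseq_LIMSEQ[OF this r]
      show "(\<lambda>n. d ((X \<circ> r) n) ((Y \<circ> s) m)) \<longlonglongrightarrow> (g \<circ> s) m" by (simp add: a_def o_def)
    qed (use fa gb in auto)
    have "\<forall>(x::nat \<Rightarrow> 'a) (y::nat \<Rightarrow> 'a) (f::nat \<Rightarrow> real) (g::nat \<Rightarrow> real) a b.
      (\<exists>M. \<forall>n. d (x n) 0 \<le> M \<and> d (y n) 0 \<le> M) \<and>
      (\<forall>n. (\<lambda>m. d (x n) (y m)) \<longlonglongrightarrow> f n) \<and> f \<longlonglongrightarrow> a \<and>
      (\<forall>m. (\<lambda>n. d (x n) (y m)) \<longlonglongrightarrow> g m) \<and> g \<longlonglongrightarrow> b
      \<longrightarrow> a = b" using st by (simp add: stable_pm_def)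
    then have "(\<exists>M. \<forall>n. d ((X \<circ> r) n) 0 \<le> M \<and> d ((Y \<circ> s) n) 0 \<le> M) \<and>
      (\<forall>n. (\<lambda>m. d ((X \<circ> r) n) ((Y \<circ> s) m)) \<longlonglongrightarrow> (f \<circ> r) n) \<and> (f \<circ> r) \<longlonglongrightarrow> \<alpha> \<and>
      (\<forall>m. (\<lambda>n. d ((X \<circ> r) n) ((Y \<circ> s) m)) \<longlonglongrightarrow> (g \<circ> s) m) \<and> (g \<circ> s) \<longlonglongrightarrow> \<beta> \<longrightarrow> \<alpha> = \<beta>"
      by (rule spec[of _ \<beta>, OF spec[of _ \<alpha>, OF spec[of _ "g \<circ> s", OF spec[of _ "f \<circ> r", OF spec[of _ "Y \<circ> s", OF spec[of _ "X \<circ> r"]]]]]])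
    then show ?thesis using H by blast
  qed
  have "\<exists>L. f \<longlonglongrightarrow> L \<and> g \<longlonglongrightarrow> L"
  proof (rule double_lim[of a "K1 + (d z 0 + K2)" f g])
    show "\<And>n m. \<bar>a n m\<bar> \<le> K1 + (d z 0 + K2)" by (rule ab)
    show "\<And>n. (\<lambda>m. a n m) \<longlonglongrightarrow> f n" by (rule fl)
    show "\<And>m. (\<lambda>n. a n m) \<longlonglongrightarrow> g m" by (rule gl)
    fix r s \<alpha> \<beta> assume "strict_mono r" "strict_mono s" "(f \<circ> r) \<longlonglongrightarrow> \<alpha>" "(g \<circ> s) \<longlonglongrightarrow> \<beta>"
    then show "\<alpha> = \<beta>" by (rule stab)
  qed
  then obtain L where "f \<longlonglongrightarrow> L" "g \<longlonglongrightarrow> L" by blast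
  then show ?thesis unfolding f_def g_def by blast
qed

end



definition convval :: "('a::real_vector \<Rightarrow> 'a \<Rightarrow> real) \<Rightarrow> 'a set \<Rightarrow> (rat \<times> 'a \<Rightarrow> real) \<Rightarrow> (rat \<times> 'a \<Rightarrow> real) \<Rightarrow> (rat \<times> 'a \<Rightarrow> real)" where
  "convval d D \<sigma> \<tau> = restrict (\<lambda>(q,z). lim (\<lambda>n. \<tau> (q, z - real_of_rat q *\<^sub>R (SOME x. defining_seq d D x \<sigma>) n))) (UNIV \<times> D)"

lemma bar_top: "bar d D x \<in> topspace (ambient D)"
  by (simp add: bar_def topspace_ambient)

lemma Tsp_top: "Tsp d D \<subseteq> topspace (ambient D)"
  by (simp add: Tsp_def closure_of_subset_topspace)

lemma Hausdorff_ambient: "Hausdorff_space (ambient D)"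
  unfolding ambient_def by (simp add: Hausdorff_space_product_topology)

lemma limit_closure:
  assumes l: "limitin X f l sequentially" and S: "\<And>n. f n \<in> S"
  shows "l \<in> X closure_of S"
  unfolding in_closure_of
proof (intro conjI allI impI)
  show "l \<in> topspace X" using l by (simp add: limitin_sequentially)
  fix T assume T: "l \<in> T \<and> openin X T"
  then obtain N where "\<forall>n\<ge>N. f n \<in> T" using l unfolding limitin_sequentially by blast
  then have "f N \<in> T" by blast
  then show "\<exists>y. y \<in> S \<and> y \<in> T" using S by blast
qed

context
  fixes d :: "'a::real_normed_vector \<Rightarrow> 'a \<Rightarrow> real" and D :: "'a set"
  assumes pm: "pseudometric d" and ti: "translation_invariant d" and st: "stable_pm d"
    and rl: "rat_linear_subspace D" and cD: "countable D"
begin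

lemma exists_def_seq:
  assumes s: "\<sigma> \<in> Tsp d D" shows "\<exists>x. defining_seq d D x \<sigma>"
proof -
  have s1: "\<sigma> \<in> topspace (ambient D)" using s Tsp_top by blast
  have H: "\<exists>w\<in>D. bar d D w \<in> basic D L \<and> True" if LL: "L \<in> Lset D" and sL: "\<sigma> \<in> basic D L" for L
  proof -
    have "openin (ambient D) (basic D L)" by (rule openin_basic[OF LL])
    then obtain y where "y \<in> bar d D ` D" "y \<in> basic D L"
      using s sL unfolding Tsp_def in_closure_of by blast
    then show ?thesis by blast
  qed
  obtain x where "(\<forall>n. x n \<in> D \<and> True) \<and> limitin (ambient D) (\<lambda>n. bar d D (x n)) \<sigma> sequentially"
    using nbhd_seq[OF cD s1 H] by blast
  then show ?thesis unfolding defining_seq_def by blast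
qed

lemma CV:
  assumes s: "\<sigma> \<in> Tsp d D" and t: "\<tau> \<in> Tsp d D" and x: "defining_seq d D x \<sigma>" and w: "w \<in> D"
  shows "(\<lambda>n. \<tau> (q, w - real_of_rat q *\<^sub>R x n)) \<longlonglongrightarrow> convval d D \<sigma> \<tau> (q, w)"
proof -
  obtain y0 where y0: "defining_seq d D y0 \<tau>" using exists_def_seq[OF t] by blast
  define x0 where "x0 = (SOME x. defining_seq d D x \<sigma>)"
  have x0: "defining_seq d D x0 \<sigma>" unfolding x0_def using exists_def_seq[OF s] by (rule someI_ex)
  obtain L1 where L1: "(\<lambda>n. \<tau> (q, w - real_of_rat q *\<^sub>R x n)) \<longlonglongrightarrow> L1"
      "(\<lambda>m. \<sigma> (q, w - real_of_rat q *\<^sub>R y0 m)) \<longlonglongrightarrow> L1"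
    using MLim[OF pm ti st rl x y0 w] by blast
  obtain L2 where L2: "(\<lambda>n. \<tau> (q, w - real_of_rat q *\<^sub>R x0 n)) \<longlonglongrightarrow> L2"
      "(\<lambda>m. \<sigma> (q, w - real_of_rat q *\<^sub>R y0 m)) \<longlonglongrightarrow> L2"
    using MLim[OF pm ti st rl x0 y0 w] by blast
  have "L1 = L2" using L1(2) L2(2) by (rule LIMSEQ_unique)
  moreover have "convval d D \<sigma> \<tau> (q, w) = L2"
    using w limI[OF L2(1)] by (simp add: convval_def x0_def)
  ultimately show ?thesis using L1(1) by simp
qed

lemma g_lim:
  assumes x: "defining_seq d D x \<sigma>" and y: "defining_seq d D y \<tau>"
  shows "limitin (ambient D) (\<lambda>m. bar d D (x n + y m))
           (restrict (\<lambda>(q,w). \<tau> (q, w - real_of_rat q *\<^sub>R x n)) (UNIV \<times> D)) sequentially"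
  unfolding ambient_def limitin_componentwise
proof (intro conjI ballI)
  show "restrict (\<lambda>(q,w). \<tau> (q, w - real_of_rat q *\<^sub>R x n)) (UNIV \<times> D) \<in> extensional (UNIV \<times> D)"
    by simp
  show "\<forall>\<^sub>F m in sequentially. bar d D (x n + y m) \<in> topspace (product_topology (\<lambda>_. euclideanreal) (UNIV \<times> D))"
    using bar_top[of d D] by (simp add: ambient_def)
  fix i :: "rat \<times> 'a" assume i: "i \<in> UNIV \<times> D"
  obtain q w where qw: "i = (q, w)" by (cases i)
  have wD: "w \<in> D" using i qw by simp
  have xD: "x n \<in> D" using x by (simp add: defining_seq_def)
  have wx: "w - real_of_rat q *\<^sub>R x n \<in> D" using Ddiff[OF pm ti st rl wD Dscale[OF pm ti st rl xD]] .
  have eq: "bar d D (x n + y m) (q, w) = d (real_of_rat q *\<^sub>R y m) (w - real_of_rat q *\<^sub>R x n)" for m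
    using bar_app[OF pm ti st rl wD, of "x n + y m" q] tr1[OF pm ti st rl, of "real_of_rat q *\<^sub>R x n" "real_of_rat q *\<^sub>R y m" w]
    by (simp add: scaleR_right_distrib)
  have "(\<lambda>m. bar d D (x n + y m) (q, w)) \<longlonglongrightarrow> \<tau> (q, w - real_of_rat q *\<^sub>R x n)"
    unfolding eq by (rule DL[OF pm ti st rl y wx])
  then show "limitin euclideanreal (\<lambda>m. bar d D (x n + y m) i)
           (restrict (\<lambda>(q,w). \<tau> (q, w - real_of_rat q *\<^sub>R x n)) (UNIV \<times> D) i) sequentially"
    using i qw by simp
qed

lemma G_lim:
  assumes s: "\<sigma> \<in> Tsp d D" and t: "\<tau> \<in> Tsp d D" and x: "defining_seq d D x \<sigma>"
  shows "limitin (ambient D) (\<lambda>n. restrict (\<lambda>(q,w). \<tau> (q, w - real_of_rat q *\<^sub>R x n)) (UNIV \<times> D))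
           (convval d D \<sigma> \<tau>) sequentially"
  unfolding ambient_def limitin_componentwise
proof (intro conjI ballI)
  show "convval d D \<sigma> \<tau> \<in> extensional (UNIV \<times> D)" by (simp add: convval_def)
  show "\<forall>\<^sub>F n in sequentially. restrict (\<lambda>(q,w). \<tau> (q, w - real_of_rat q *\<^sub>R x n)) (UNIV \<times> D) \<in> topspace (product_topology (\<lambda>_. euclideanreal) (UNIV \<times> D))"
    by simp
  fix i :: "rat \<times> 'a" assume i: "i \<in> UNIV \<times> D"
  obtain q w where qw: "i = (q, w)" by (cases i)
  have wD: "w \<in> D" using i qw by simp
  show "limitin euclideanreal (\<lambda>n. restrict (\<lambda>(q,w). \<tau> (q, w - real_of_rat q *\<^sub>R x n)) (UNIV \<times> D) i)
          (convval d D \<sigma> \<tau> i) sequentially"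
    using CV[OF s t x wD, of q] i qw by simp
qed

lemma conv_eq:
  assumes s: "\<sigma> \<in> Tsp d D" and t: "\<tau> \<in> Tsp d D"
  shows "conv d D \<sigma> \<tau> = convval d D \<sigma> \<tau>"
  unfolding conv_def
proof (rule the_equality)
  show "\<forall>x y. defining_seq d D x \<sigma> \<and> defining_seq d D y \<tau> \<longrightarrow>
      (\<exists>g. (\<forall>n. limitin (ambient D) (\<lambda>m. bar d D (x n + y m)) (g n) sequentially)
           \<and> limitin (ambient D) g (convval d D \<sigma> \<tau>) sequentially)"
  proof (intro allI impI)
    fix x y assume xy: "defining_seq d D x \<sigma> \<and> defining_seq d D y \<tau>"
    show "\<exists>g. (\<forall>n. limitin (ambient D) (\<lambda>m. bar d D (x n + y m)) (g n) sequentially)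
           \<and> limitin (ambient D) g (convval d D \<sigma> \<tau>) sequentially"
      using g_lim[of x \<sigma> y \<tau>] G_lim[OF s t, of x] xy
      by (intro exI[of _ "\<lambda>n. restrict (\<lambda>(q,w). \<tau> (q, w - real_of_rat q *\<^sub>R x n)) (UNIV \<times> D)"]) simp
  qed
next
  fix \<rho> assume H: "\<forall>x y. defining_seq d D x \<sigma> \<and> defining_seq d D y \<tau> \<longrightarrow>
      (\<exists>g. (\<forall>n. limitin (ambient D) (\<lambda>m. bar d D (x n + y m)) (g n) sequentially)
           \<and> limitin (ambient D) g \<rho> sequentially)"
  obtain x0 where x0: "defining_seq d D x0 \<sigma>" using exists_def_seq[OF s] by blast
  obtain y0 where y0: "defining_seq d D y0 \<tau>" using exists_def_seq[OF t] by blast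
  obtain g where g1: "\<And>n. limitin (ambient D) (\<lambda>m. bar d D (x0 n + y0 m)) (g n) sequentially"
    and g2: "limitin (ambient D) g \<rho> sequentially"
    using H x0 y0 by blast
  define G where "G n = restrict (\<lambda>(q,w). \<tau> (q, w - real_of_rat q *\<^sub>R x0 n)) (UNIV \<times> D)" for n
  have "g n = G n" for n
    using limitin_Hausdorff_unique[OF g1[of n] g_lim[OF x0 y0, of n] trivial_limit_sequentially Hausdorff_ambient]
    by (simp add: G_def)
  then have "g = G" by blast
  then have "limitin (ambient D) G \<rho> sequentially" using g2 by simp
  moreover have "limitin (ambient D) G (convval d D \<sigma> \<tau>) sequentially"
    unfolding G_def by (rule G_lim[OF s t x0])
  ultimately show "\<rho> = convval d D \<sigma> \<tau>"
    by (rule limitin_Hausdorff_unique[OF _ _ trivial_limit_sequentially Hausdorff_ambient])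
qed

lemma convval_T:
  assumes s: "\<sigma> \<in> Tsp d D" and t: "\<tau> \<in> Tsp d D"
  shows "convval d D \<sigma> \<tau> \<in> Tsp d D"
proof -
  obtain x0 where x0: "defining_seq d D x0 \<sigma>" using exists_def_seq[OF s] by blast
  obtain y0 where y0: "defining_seq d D y0 \<tau>" using exists_def_seq[OF t] by blast
  define G where "G n = restrict (\<lambda>(q,w). \<tau> (q, w - real_of_rat q *\<^sub>R x0 n)) (UNIV \<times> D)" for n
  have GT: "G n \<in> Tsp d D" for n
  proof -
    have "bar d D (x0 n + y0 m) \<in> bar d D ` D" for m
      using x0 y0 Dadd[OF pm ti st rl] by (simp add: defining_seq_def)
    then show ?thesis unfolding Tsp_def G_def by (rule limit_closure[OF g_lim[OF x0 y0]])
  qed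
  have "convval d D \<sigma> \<tau> \<in> ambient D closure_of (Tsp d D)"
    by (rule limit_closure[OF G_lim[OF s t x0, folded G_def] GT])
  then show ?thesis by (simp add: Tsp_def)
qed

end



definition Cset :: "('a::real_vector \<Rightarrow> 'a \<Rightarrow> real) \<Rightarrow> 'a set \<Rightarrow> ((rat \<times> 'a) \<times> rat \<times> rat) list \<Rightarrow> rat \<Rightarrow> 'a \<Rightarrow> rat \<Rightarrow> rat \<Rightarrow> (rat \<times> 'a \<Rightarrow> real) set" where
  "Cset d D L q w a b = {\<tau> \<in> topspace (ambient D). \<forall>v\<in>D. bar d D v \<in> basic D L \<longrightarrow>
      real_of_rat a \<le> \<tau> (q, w - real_of_rat q *\<^sub>R v) \<and> \<tau> (q, w - real_of_rat q *\<^sub>R v) \<le> real_of_rat b}"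

lemma convval_top: "convval d D \<sigma> \<tau> \<in> topspace (ambient D)"
  by (simp add: convval_def topspace_ambient)

lemma basic_fsigma:
  assumes L: "L \<in> Lset D"
  shows "\<exists>K::nat \<Rightarrow> (rat \<times> 'a \<Rightarrow> real) set. (\<forall>n. closedin (ambient D) (K n)) \<and> basic D L = \<Union>(range K)"
proof -
  define K where "K n = {f \<in> topspace (ambient D). \<forall>j\<in>set L.
     real_of_rat (fst (snd j)) + inverse (real (Suc n)) \<le> f (fst j) \<and> f (fst j) \<le> real_of_rat (snd (snd j)) - inverse (real (Suc n))}" for n
  have kI: "fst j \<in> UNIV \<times> D" if "j \<in> set L" for j
  proof -
    have "set L \<subseteq> (UNIV \<times> D) \<times> UNIV \<times> UNIV" using L by (simp add: Lset_def lists_eq_set)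
    then show ?thesis using that by auto
  qed
  have cl: "closedin (ambient D) (K n)" for n
    unfolding K_def by (rule closedin_box) (rule kI)
  have "basic D L = \<Union>(range K)"
  proof
    show "\<Union>(range K) \<subseteq> basic D L"
    proof
      fix f assume "f \<in> \<Union>(range K)"
      then obtain n where f: "f \<in> K n" by blast
      have ip: "inverse (real (Suc n)) > 0" by simp
      have "\<forall>j\<in>set L. real_of_rat (fst (snd j)) < f (fst j) \<and> f (fst j) < real_of_rat (snd (snd j))"
      proof
        fix j assume j: "j \<in> set L"
        have "real_of_rat (fst (snd j)) + inverse (real (Suc n)) \<le> f (fst j) \<and> f (fst j) \<le> real_of_rat (snd (snd j)) - inverse (real (Suc n))"
          using f j unfolding K_def by blast
        then show "real_of_rat (fst (snd j)) < f (fst j) \<and> f (fst j) < real_of_rat (snd (snd j))"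
          using ip by linarith
      qed
      then show "f \<in> basic D L" using f unfolding basic_def K_def by (auto simp: case_prod_beta)
    qed
  next
    show "basic D L \<subseteq> \<Union>(range K)"
    proof
      fix f assume f: "f \<in> basic D L"
      have ftop: "f \<in> topspace (ambient D)" using f by (simp add: basic_def)
      have gap: "\<forall>j\<in>set L. real_of_rat (fst (snd j)) < f (fst j) \<and> f (fst j) < real_of_rat (snd (snd j))"
        using f unfolding basic_def by (auto simp: case_prod_beta)
      show "f \<in> \<Union>(range K)"
      proof (cases "L = []")
        case True
        then have "f \<in> K 0" using ftop by (simp add: K_def)
        then show ?thesis by blast
      next
        case False
        define gp where "gp j = min (f (fst j) - real_of_rat (fst (snd j))) (real_of_rat (snd (snd j)) - f (fst j))" for j
        define \<delta> where "\<delta> = Min (gp ` set L)"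
        have "finite (gp ` set L)" "gp ` set L \<noteq> {}" using False by auto
        moreover have "\<forall>y\<in>gp ` set L. 0 < y" using gap by (auto simp: gp_def)
        ultimately have dpos: "\<delta> > 0" unfolding \<delta>_def by (simp add: Min_gr_iff)
        obtain n where n: "inverse (real (Suc n)) < \<delta>" using reals_Archimedean[OF dpos] by blast
        have dle: "\<delta> \<le> gp j" if "j \<in> set L" for j
          unfolding \<delta>_def using that by (simp add: Min_le)
        have "f \<in> K n" unfolding K_def
        proof (rule CollectI, rule conjI[OF ftop], rule ballI)
          fix j assume j: "j \<in> set L"
          have "inverse (real (Suc n)) < gp j" using n dle[OF j] by linarith
          then show "real_of_rat (fst (snd j)) + inverse (real (Suc n)) \<le> f (fst j) \<and>
                f (fst j) \<le> real_of_rat (snd (snd j)) - inverse (real (Suc n))"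
            unfolding gp_def by simp
        qed
        then show ?thesis by blast
      qed
    qed
  qed
  then show ?thesis using cl by blast
qed

lemma prod_fsigma:
  assumes L: "L \<in> Lset D" and C: "closedin (ambient D) C"
  shows "fsigma_in (prod_topology (ambient D) (ambient D)) (basic D L \<times> C)"
proof -
  from basic_fsigma[OF L] obtain K :: "nat \<Rightarrow> (rat \<times> 'a \<Rightarrow> real) set" where K0: "(\<forall>n. closedin (ambient D) (K n)) \<and> basic D L = \<Union>(range K)"
    by (elim exE)
  then have K: "\<And>n. closedin (ambient D) (K n)" and eq: "basic D L = \<Union>(range K)" by blast+
  have "basic D L \<times> C = \<Union>(range (\<lambda>n. K n \<times> C))" unfolding eq by blast
  moreover have "fsigma_in (prod_topology (ambient D) (ambient D)) (\<Union>(range (\<lambda>n. K n \<times> C)))"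
  proof (rule fsigma_in_Union)
    show "countable (range (\<lambda>n. K n \<times> C))" by (rule countable_image) (rule countableI_type)
    fix S assume "S \<in> range (\<lambda>n. K n \<times> C)"
    then obtain n where S: "S = K n \<times> C" by blast
    have "closedin (prod_topology (ambient D) (ambient D)) (K n \<times> C)"
      using K[of n] C by (simp add: closedin_prod_Times_iff)
    then show "fsigma_in (prod_topology (ambient D) (ambient D)) S" unfolding S by (rule closed_imp_fsigma_in)
  qed
  ultimately show ?thesis by simp
qed

context
  fixes d :: "'a::real_normed_vector \<Rightarrow> 'a \<Rightarrow> real" and D :: "'a set"
  assumes pm: "pseudometric d" and ti: "translation_invariant d" and st: "stable_pm d"
    and rl: "rat_linear_subspace D" and cD: "countable D"
begin

lemma Cset_closed:
  assumes w: "w \<in> D" shows "closedin (ambient D) (Cset d D L q w a b)"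
proof -
  have eq: "Cset d D L q w a b = {f \<in> topspace (ambient D). \<forall>j\<in>{v\<in>D. bar d D v \<in> basic D L}.
      (\<lambda>_. real_of_rat a) j \<le> f ((\<lambda>v. (q, w - real_of_rat q *\<^sub>R v)) j) \<and>
      f ((\<lambda>v. (q, w - real_of_rat q *\<^sub>R v)) j) \<le> (\<lambda>_. real_of_rat b) j}"
    unfolding Cset_def by auto
  show ?thesis unfolding eq
  proof (rule closedin_box)
    fix j assume "j \<in> {v\<in>D. bar d D v \<in> basic D L}"
    then have "j \<in> D" by simp
    then show "(q, w - real_of_rat q *\<^sub>R j) \<in> UNIV \<times> D"
      using Ddiff[OF pm ti st rl w Dscale[OF pm ti st rl]] by simp
  qed
qed

lemma Char:
  assumes w: "w \<in> D"
  shows "{p \<in> Tsp d D \<times> Tsp d D. convval d D (fst p) (snd p) (q, w) \<in> {a0<..<b0}}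
     = \<Union>((\<lambda>(L,a,b). (Tsp d D \<inter> basic D L) \<times> (Tsp d D \<inter> Cset d D L q w a b)) `
          {(L,a,b). L \<in> Lset D \<and> a0 < real_of_rat a \<and> real_of_rat b < b0})"
  (is "?A = ?B")
proof
  show "?A \<subseteq> ?B"
  proof
    fix p assume "p \<in> ?A"
    then obtain \<sigma> \<tau> where p: "p = (\<sigma>, \<tau>)" and s: "\<sigma> \<in> Tsp d D" and t: "\<tau> \<in> Tsp d D"
      and c: "a0 < convval d D \<sigma> \<tau> (q, w)" "convval d D \<sigma> \<tau> (q, w) < b0"
      by (cases p) auto
    define c0 where "c0 = convval d D \<sigma> \<tau> (q, w)"
    obtain a where a: "a0 < real_of_rat a" "real_of_rat a < c0" using of_rat_dense c unfolding c0_def by blast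
    obtain b where b: "c0 < real_of_rat b" "real_of_rat b < b0" using of_rat_dense c unfolding c0_def by blast
    have ttop: "\<tau> \<in> topspace (ambient D)" using t Tsp_top by blast
    have stop: "\<sigma> \<in> topspace (ambient D)" using s Tsp_top by blast
    have "\<exists>L\<in>Lset D. \<sigma> \<in> basic D L \<and> \<tau> \<in> Cset d D L q w a b"
    proof (rule ccontr)
      assume nH: "\<not> ?thesis"
      have H: "\<exists>v\<in>D. bar d D v \<in> basic D L \<and>
          \<not> (real_of_rat a \<le> \<tau> (q, w - real_of_rat q *\<^sub>R v) \<and> \<tau> (q, w - real_of_rat q *\<^sub>R v) \<le> real_of_rat b)"
        if LL: "L \<in> Lset D" and sL: "\<sigma> \<in> basic D L" for L
      proof -
        have "\<tau> \<notin> Cset d D L q w a b" using nH LL sL by blast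
        then show ?thesis using ttop unfolding Cset_def by blast
      qed
      obtain x where x: "\<forall>n. x n \<in> D \<and>
          \<not> (real_of_rat a \<le> \<tau> (q, w - real_of_rat q *\<^sub>R x n) \<and> \<tau> (q, w - real_of_rat q *\<^sub>R x n) \<le> real_of_rat b)"
        and lx: "limitin (ambient D) (\<lambda>n. bar d D (x n)) \<sigma> sequentially"
      proof -
        have "\<exists>x. (\<forall>n. x n \<in> D \<and>
          \<not> (real_of_rat a \<le> \<tau> (q, w - real_of_rat q *\<^sub>R x n) \<and> \<tau> (q, w - real_of_rat q *\<^sub>R x n) \<le> real_of_rat b))
          \<and> limitin (ambient D) (\<lambda>n. bar d D (x n)) \<sigma> sequentially"
        proof (rule nbhd_seq[OF cD stop, where h = "bar d D" and P = "\<lambda>v. \<not> (real_of_rat a \<le> \<tau> (q, w - real_of_rat q *\<^sub>R v) \<and> \<tau> (q, w - real_of_rat q *\<^sub>R v) \<le> real_of_rat b)"])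
          fix L assume "L \<in> Lset D" "\<sigma> \<in> basic D L"
          then show "\<exists>v\<in>D. bar d D v \<in> basic D L \<and>
            \<not> (real_of_rat a \<le> \<tau> (q, w - real_of_rat q *\<^sub>R v) \<and> \<tau> (q, w - real_of_rat q *\<^sub>R v) \<le> real_of_rat b)"
            by (rule H)
        qed
        then obtain x where "(\<forall>n. x n \<in> D \<and>
          \<not> (real_of_rat a \<le> \<tau> (q, w - real_of_rat q *\<^sub>R x n) \<and> \<tau> (q, w - real_of_rat q *\<^sub>R x n) \<le> real_of_rat b))
          \<and> limitin (ambient D) (\<lambda>n. bar d D (x n)) \<sigma> sequentially" by (elim exE)
        then show thesis using that by blast
      qed
      have xd: "defining_seq d D x \<sigma>" using x lx by (simp add: defining_seq_def)
      have lim: "(\<lambda>n. \<tau> (q, w - real_of_rat q *\<^sub>R x n)) \<longlonglongrightarrow> c0"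
        unfolding c0_def by (rule CV[OF pm ti st rl cD s t xd w])
      have e1: "\<forall>\<^sub>F n in sequentially. real_of_rat a < \<tau> (q, w - real_of_rat q *\<^sub>R x n)"
        using order_tendstoD(1)[OF lim a(2)] .
      have e2: "\<forall>\<^sub>F n in sequentially. \<tau> (q, w - real_of_rat q *\<^sub>R x n) < real_of_rat b"
        using order_tendstoD(2)[OF lim b(1)] .
      obtain N where "\<forall>n\<ge>N. real_of_rat a < \<tau> (q, w - real_of_rat q *\<^sub>R x n) \<and> \<tau> (q, w - real_of_rat q *\<^sub>R x n) < real_of_rat b"
        using eventually_conj[OF e1 e2] unfolding eventually_sequentially by blast
      then have "real_of_rat a < \<tau> (q, w - real_of_rat q *\<^sub>R x N) \<and> \<tau> (q, w - real_of_rat q *\<^sub>R x N) < real_of_rat b"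
        by blast
      then show False using spec[OF x, of N] by linarith
    qed
    then obtain L where L: "L \<in> Lset D" "\<sigma> \<in> basic D L" "\<tau> \<in> Cset d D L q w a b" by blast
    have "(L, a, b) \<in> {(L,a,b). L \<in> Lset D \<and> a0 < real_of_rat a \<and> real_of_rat b < b0}"
      using L a b by simp
    moreover have "p \<in> (\<lambda>(L,a,b). (Tsp d D \<inter> basic D L) \<times> (Tsp d D \<inter> Cset d D L q w a b)) (L, a, b)"
      using p s t L by simp
    ultimately show "p \<in> ?B" by blast
  qed
next
  show "?B \<subseteq> ?A"
  proof
    fix p assume "p \<in> ?B"
    then obtain L a b where Lab: "L \<in> Lset D" "a0 < real_of_rat a" "real_of_rat b < b0"
      and pin: "p \<in> (Tsp d D \<inter> basic D L) \<times> (Tsp d D \<inter> Cset d D L q w a b)" by blast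
    obtain \<sigma> \<tau> where p: "p = (\<sigma>, \<tau>)" by (cases p)
    have s: "\<sigma> \<in> Tsp d D" "\<sigma> \<in> basic D L" and t: "\<tau> \<in> Tsp d D" "\<tau> \<in> Cset d D L q w a b"
      using pin p by auto
    obtain x where xd: "defining_seq d D x \<sigma>" using exists_def_seq[OF pm ti st rl cD s(1)] by blast
    have xD: "x n \<in> D" for n using xd by (simp add: defining_seq_def)
    have "limitin (ambient D) (\<lambda>n. bar d D (x n)) \<sigma> sequentially" using xd by (simp add: defining_seq_def)
    then have ev: "\<forall>\<^sub>F n in sequentially. bar d D (x n) \<in> basic D L"
      using openin_basic[OF Lab(1)] s(2) unfolding limitin_def by blast
    have ev2: "\<forall>\<^sub>F n in sequentially. real_of_rat a \<le> \<tau> (q, w - real_of_rat q *\<^sub>R x n) \<and>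
        \<tau> (q, w - real_of_rat q *\<^sub>R x n) \<le> real_of_rat b"
      using ev
    proof (rule eventually_mono)
      fix n assume "bar d D (x n) \<in> basic D L"
      then show "real_of_rat a \<le> \<tau> (q, w - real_of_rat q *\<^sub>R x n) \<and> \<tau> (q, w - real_of_rat q *\<^sub>R x n) \<le> real_of_rat b"
        using t(2) xD[of n] unfolding Cset_def by blast
    qed
    have lim: "(\<lambda>n. \<tau> (q, w - real_of_rat q *\<^sub>R x n)) \<longlonglongrightarrow> convval d D \<sigma> \<tau> (q, w)"
      by (rule CV[OF pm ti st rl cD s(1) t(1) xd w])
    have "real_of_rat a \<le> convval d D \<sigma> \<tau> (q, w)"
      by (rule tendsto_lowerbound[OF lim]) (use ev2 in \<open>auto elim: eventually_mono\<close>)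
    moreover have "convval d D \<sigma> \<tau> (q, w) \<le> real_of_rat b"
      by (rule tendsto_upperbound[OF lim]) (use ev2 in \<open>auto elim: eventually_mono\<close>)
    ultimately show "p \<in> ?A" using p s t Lab by auto
  qed
qed

end



context
  fixes d :: "'a::real_normed_vector \<Rightarrow> 'a \<Rightarrow> real" and D :: "'a set"
  assumes pm: "pseudometric d" and ti: "translation_invariant d" and st: "stable_pm d"
    and rl: "rat_linear_subspace D" and cD: "countable D"
begin

lemma topX: "topspace (subtopology (prod_topology (ambient D) (ambient D)) (Tsp d D \<times> Tsp d D)) = Tsp d D \<times> Tsp d D"
  using Tsp_top[of d D] by (auto simp: topspace_subtopology topspace_prod_topology)

lemma piece_fsigma:
  assumes L: "L \<in> Lset D" and w: "w \<in> D"
  shows "fsigma_in (subtopology (prod_topology (ambient D) (ambient D)) (Tsp d D \<times> Tsp d D))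
     ((Tsp d D \<inter> basic D L) \<times> (Tsp d D \<inter> Cset d D L q w a b))"
  unfolding fsigma_in_subtopology
proof (intro exI conjI)
  show "fsigma_in (prod_topology (ambient D) (ambient D)) (basic D L \<times> Cset d D L q w a b)"
    by (rule prod_fsigma[OF L Cset_closed[OF pm ti st rl cD w]])
  show "(Tsp d D \<inter> basic D L) \<times> (Tsp d D \<inter> Cset d D L q w a b) = basic D L \<times> Cset d D L q w a b \<inter> Tsp d D \<times> Tsp d D"
    by blast
qed

lemma coord_fsigma:
  assumes w: "w \<in> D"
  shows "fsigma_in (subtopology (prod_topology (ambient D) (ambient D)) (Tsp d D \<times> Tsp d D))
     {p \<in> Tsp d D \<times> Tsp d D. convval d D (fst p) (snd p) (q, w) \<in> {a0<..<b0}}"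
  unfolding Char[OF pm ti st rl cD w]
proof (rule fsigma_in_Union)
  have "{(L,a,b). L \<in> Lset D \<and> a0 < real_of_rat a \<and> real_of_rat b < b0} \<subseteq> Lset D \<times> (UNIV :: (rat \<times> rat) set)"
    by auto
  moreover have "countable (Lset D \<times> (UNIV :: (rat \<times> rat) set))"
    by (rule countable_SIGMA[OF Lset_countable[OF cD]]) (rule countableI_type)
  ultimately have "countable {(L,a,b). L \<in> Lset D \<and> a0 < real_of_rat a \<and> real_of_rat b < b0}"
    by (rule countable_subset)
  then show "countable ((\<lambda>(L,a,b). (Tsp d D \<inter> basic D L) \<times> (Tsp d D \<inter> Cset d D L q w a b)) `
          {(L,a,b). L \<in> Lset D \<and> a0 < real_of_rat a \<and> real_of_rat b < b0})"
    by (rule countable_image)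
  fix S assume "S \<in> (\<lambda>(L,a,b). (Tsp d D \<inter> basic D L) \<times> (Tsp d D \<inter> Cset d D L q w a b)) `
          {(L,a,b). L \<in> Lset D \<and> a0 < real_of_rat a \<and> real_of_rat b < b0}"
  then obtain x where x: "x \<in> {(L,a,b). L \<in> Lset D \<and> a0 < real_of_rat a \<and> real_of_rat b < b0}"
    and Sx: "S = (\<lambda>(L,a,b). (Tsp d D \<inter> basic D L) \<times> (Tsp d D \<inter> Cset d D L q w a b)) x"
    by (rule imageE)
  obtain L a b where xe: "x = (L, a, b)" by (rule prod_cases3[of x])
  have L: "L \<in> Lset D" using x xe by simp
  have S: "S = (Tsp d D \<inter> basic D L) \<times> (Tsp d D \<inter> Cset d D L q w a b)" using Sx xe by simp
  show "fsigma_in (subtopology (prod_topology (ambient D) (ambient D)) (Tsp d D \<times> Tsp d D)) S"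
    unfolding S by (rule piece_fsigma[OF L w])
qed

lemma basic_pre_fsigma:
  assumes "M \<in> Lset D"
  shows "fsigma_in (subtopology (prod_topology (ambient D) (ambient D)) (Tsp d D \<times> Tsp d D))
     {p \<in> Tsp d D \<times> Tsp d D. convval d D (fst p) (snd p) \<in> basic D M}"
  using assms
proof (induction M)
  case Nil
  have "{p \<in> Tsp d D \<times> Tsp d D. convval d D (fst p) (snd p) \<in> basic D []} = Tsp d D \<times> Tsp d D"
    unfolding basic_Nil using convval_top[of d D] by blast
  moreover have "fsigma_in (subtopology (prod_topology (ambient D) (ambient D)) (Tsp d D \<times> Tsp d D)) (Tsp d D \<times> Tsp d D)"
    using fsigma_in_topspace[of "subtopology (prod_topology (ambient D) (ambient D)) (Tsp d D \<times> Tsp d D)"]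
    unfolding topX .
  ultimately show ?case by (simp only:)
next
  case (Cons t M)
  obtain k a b where t0: "t = (k, a, b)" by (rule prod_cases3[of t])
  obtain q w where k: "k = (q, w)" by (rule prod.exhaust[of k])
  have t: "t = ((q, w), a, b)" using t0 k by simp
  have "t # M \<in> lists ((UNIV \<times> D) \<times> UNIV \<times> UNIV)" using Cons.prems by (simp add: Lset_def)
  then have w: "w \<in> D" and M: "M \<in> Lset D" unfolding Lset_def t by auto
  have eq: "{p \<in> Tsp d D \<times> Tsp d D. convval d D (fst p) (snd p) \<in> basic D (t # M)}
     = {p \<in> Tsp d D \<times> Tsp d D. convval d D (fst p) (snd p) (q, w) \<in> {real_of_rat a<..<real_of_rat b}}
       \<inter> {p \<in> Tsp d D \<times> Tsp d D. convval d D (fst p) (snd p) \<in> basic D M}"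
    by (auto simp: basic_def t)
  show ?case unfolding eq
    by (rule fsigma_in_Int[OF coord_fsigma[OF w] Cons.IH[OF M]])
qed

lemma open_pre_fsigma:
  assumes W: "openin (ambient D) W"
  shows "fsigma_in (subtopology (prod_topology (ambient D) (ambient D)) (Tsp d D \<times> Tsp d D))
     {p \<in> Tsp d D \<times> Tsp d D. convval d D (fst p) (snd p) \<in> W}"
proof -
  have eq: "{p \<in> Tsp d D \<times> Tsp d D. convval d D (fst p) (snd p) \<in> W}
    = \<Union>((\<lambda>M. {p \<in> Tsp d D \<times> Tsp d D. convval d D (fst p) (snd p) \<in> basic D M}) ` {M \<in> Lset D. basic D M \<subseteq> W})"
  proof
    show "{p \<in> Tsp d D \<times> Tsp d D. convval d D (fst p) (snd p) \<in> W}
      \<subseteq> \<Union>((\<lambda>M. {p \<in> Tsp d D \<times> Tsp d D. convval d D (fst p) (snd p) \<in> basic D M}) ` {M \<in> Lset D. basic D M \<subseteq> W})"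
    proof
      fix p assume p: "p \<in> {p \<in> Tsp d D \<times> Tsp d D. convval d D (fst p) (snd p) \<in> W}"
      then obtain M where "M \<in> Lset D" "convval d D (fst p) (snd p) \<in> basic D M" "basic D M \<subseteq> W"
        using basic_nbhd[OF W] by blast
      then show "p \<in> \<Union>((\<lambda>M. {p \<in> Tsp d D \<times> Tsp d D. convval d D (fst p) (snd p) \<in> basic D M}) ` {M \<in> Lset D. basic D M \<subseteq> W})"
        using p by blast
    qed
  qed blast
  show ?thesis unfolding eq
  proof (rule fsigma_in_Union)
    show "countable ((\<lambda>M. {p \<in> Tsp d D \<times> Tsp d D. convval d D (fst p) (snd p) \<in> basic D M}) ` {M \<in> Lset D. basic D M \<subseteq> W})"
      by (rule countable_image, rule countable_subset[OF _ Lset_countable[OF cD]]) blast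
    fix S assume "S \<in> (\<lambda>M. {p \<in> Tsp d D \<times> Tsp d D. convval d D (fst p) (snd p) \<in> basic D M}) ` {M \<in> Lset D. basic D M \<subseteq> W}"
    then obtain M where M: "M \<in> Lset D" and S: "S = {p \<in> Tsp d D \<times> Tsp d D. convval d D (fst p) (snd p) \<in> basic D M}"
      by blast
    show "fsigma_in (subtopology (prod_topology (ambient D) (ambient D)) (Tsp d D \<times> Tsp d D)) S"
      unfolding S by (rule basic_pre_fsigma[OF M])
  qed
qed

lemma main:
  shows "baire1_map
           (subtopology (prod_topology (ambient D) (ambient D)) (Tsp d D \<times> Tsp d D))
           (subtopology (ambient D) (Tsp d D))
           (\<lambda>(\<sigma>, \<tau>). conv d D \<sigma> \<tau>)"
  unfolding baire1_map_def
proof (intro conjI allI impI)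
  have topY: "topspace (subtopology (ambient D) (Tsp d D)) = Tsp d D"
    using Tsp_top[of d D] by (auto simp: topspace_subtopology)
  have cv: "(\<lambda>(\<sigma>, \<tau>). conv d D \<sigma> \<tau>) p = convval d D (fst p) (snd p)"
    "convval d D (fst p) (snd p) \<in> Tsp d D" if "p \<in> Tsp d D \<times> Tsp d D" for p
  proof -
    obtain \<sigma> \<tau> where p: "p = (\<sigma>, \<tau>)" by (cases p)
    have s: "\<sigma> \<in> Tsp d D" and t: "\<tau> \<in> Tsp d D" using that p by auto
    show "(\<lambda>(\<sigma>, \<tau>). conv d D \<sigma> \<tau>) p = convval d D (fst p) (snd p)"
      using conv_eq[OF pm ti st rl cD s t] p by simp
    show "convval d D (fst p) (snd p) \<in> Tsp d D"
      using convval_T[OF pm ti st rl cD s t] p by simp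
  qed
  show "(\<lambda>(\<sigma>, \<tau>). conv d D \<sigma> \<tau>) \<in> topspace (subtopology (prod_topology (ambient D) (ambient D)) (Tsp d D \<times> Tsp d D))
      \<rightarrow> topspace (subtopology (ambient D) (Tsp d D))"
    unfolding topX topY using cv by auto
  fix U assume U: "openin (subtopology (ambient D) (Tsp d D)) U"
  then obtain W where W: "openin (ambient D) W" and UW: "U = W \<inter> Tsp d D"
    unfolding openin_subtopology by blast
  have "{x \<in> topspace (subtopology (prod_topology (ambient D) (ambient D)) (Tsp d D \<times> Tsp d D)).
          (\<lambda>(\<sigma>, \<tau>). conv d D \<sigma> \<tau>) x \<in> U}
     = {p \<in> Tsp d D \<times> Tsp d D. convval d D (fst p) (snd p) \<in> W}"
    unfolding topX UW using cv by auto
  then show "fsigma_in (subtopology (prod_topology (ambient D) (ambient D)) (Tsp d D \<times> Tsp d D))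
     {x \<in> topspace (subtopology (prod_topology (ambient D) (ambient D)) (Tsp d D \<times> Tsp d D)).
          (\<lambda>(\<sigma>, \<tau>). conv d D \<sigma> \<tau>) x \<in> U}"
    using open_pre_fsigma[OF W] by simp
qed

end

theorem corollary4p6:
  fixes d :: "'a::banach \<Rightarrow> 'a \<Rightarrow> real" and D :: "'a set"
  assumes "separable_space TYPE('a)"
    and "infinite_dimensional TYPE('a)"
    and "pseudometric d" and "translation_invariant d" and "stable_pm d"
    and "id_coarse_equiv d"
    and "countable D" and "closure D = UNIV" and "rat_linear_subspace D"
  shows "baire1_map
           (subtopology (prod_topology (ambient D) (ambient D)) (Tsp d D \<times> Tsp d D))
           (subtopology (ambient D) (Tsp d D))
           (\<lambda>(\<sigma>, \<tau>). conv d D \<sigma> \<tau>)"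
  by (rule main[OF assms(3,4,5,9,7)])



end
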